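(* Let $k\ge2$, $n\ge1$ be integers, let $\bar{\mathcal{P}}\in\mathbb{R}^{[k,n]}$ be a columnwise-substochastic tensor, $\mathbf{v}\in\mathbb{R}^n$ a stochastic vector and $\alpha\in[0,1)$. Define $\mathcal{P}\in\mathbb{R}^{[k,n]}$ by $p_{ii_2\dots i_k}:=\bar p_{ii_2\dots i_k}+v_i\left(1-\sum_{\ell=1}^n\bar p_{\ell i_2\dots i_k}\right)$. Then the MPR problem $$\mathbf{x}=\alpha\mathcal{P}\mathbf{x}^{k-1}+(1-\alpha)\mathbf{v},\quad\mathbf{x}\in\mathbb{R}^n_+,\quad\mathbf{e}^T\mathbf{x}=1$$ has a unique solution if and only if the MLPPR system $(\mathbf{e}^T\mathbf{y})^{k-2}\mathbf{y}-\alpha\bar{\mathcal{P}}\mathbf{y}^{k-1}=\mathbf{v}$ has a unique nonnegative solution $\mathbf{y}\in\mathbb{R}^n_+$.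
   Context: For $\mathcal{P}\in\mathbb{R}^{[k,n]}$ (real tensors of order $k$, dimension $n$) and $\mathbf{y}\in\mathbb{R}^n$, $(\mathcal{P}\mathbf{y}^{k-1})_i=\sum_{i_2,\dots,i_k}p_{i i_2\dots i_k}y_{i_2}\cdots y_{i_k}$. $\bar{\mathcal{P}}$ is columnwise-substochastic if its entries are nonnegative and $\sum_{i}\bar p_{i i_2\dots i_k}\le1$ for all $i_2,\dots,i_k$. $\mathbf{e}$ is the all-ones vector; a stochastic vector is nonnegative with entries summing to $1$. *)

theory Defs
  imports Complex_Main
begin

text \<open>A tensor of order k and dimension n is a function P :: 'n \<Rightarrow> 'n list \<Rightarrow> real,
where P i is is the entry p_{i i_2 ... i_k} for a multi-index list is = [i_2,...,i_k]
of length k-1 (values at lists of other lengths are irrelevant).\<close>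

definition multi_idx :: "nat \<Rightarrow> 'n::finite list set" where
  "multi_idx m = {is. length is = m}"

text \<open>(P y^{k-1})_i = sum over i_2..i_k of p_{i i_2..i_k} y_{i_2} ... y_{i_k}\<close>
definition tensor_apply :: "nat \<Rightarrow> ('n::finite \<Rightarrow> 'n list \<Rightarrow> real) \<Rightarrow> ('n \<Rightarrow> real) \<Rightarrow> 'n \<Rightarrow> real" where
  "tensor_apply k P y i = (\<Sum>is\<in>multi_idx (k - 1). P i is * prod_list (map y is))"

definition columnwise_substochastic :: "nat \<Rightarrow> ('n::finite \<Rightarrow> 'n list \<Rightarrow> real) \<Rightarrow> bool" where
  "columnwise_substochastic k P \<longleftrightarrow>
     (\<forall>i. \<forall>is\<in>multi_idx (k - 1). 0 \<le> P i is) \<and>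
     (\<forall>is\<in>multi_idx (k - 1). (\<Sum>i\<in>UNIV. P i is) \<le> 1)"

definition stochastic_vec :: "('n::finite \<Rightarrow> real) \<Rightarrow> bool" where
  "stochastic_vec v \<longleftrightarrow> (\<forall>i. 0 \<le> v i) \<and> (\<Sum>i\<in>UNIV. v i) = 1"

end

theory Submission
  imports Defs
begin

lemma prod_list_scale: "prod_list (map (\<lambda>j. c * y j) is) = (c::real) ^ length is * prod_list (map y is)"
  by (induction "is") auto

lemma tensor_scale:
  "tensor_apply k Q (\<lambda>j. c * y j) i = c^(k-1) * tensor_apply k Q y i"
  unfolding tensor_apply_def sum_distrib_left
  by (rule sum.cong) (auto simp: multi_idx_def prod_list_scale mult_ac)

lemma finite_multi_idx: "finite (multi_idx m :: 'n::finite list set)"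
  unfolding multi_idx_def using finite_lists_length_eq[of "UNIV::'n set" m] by simp

lemma multi_idx_Suc: "multi_idx (Suc m) = (\<lambda>(j,is). j#is) ` (UNIV \<times> multi_idx m)"
  unfolding multi_idx_def by (auto simp: length_Suc_conv image_iff)

lemma sum_prod_pow:
  fixes x :: "'n::finite \<Rightarrow> real"
  shows "(\<Sum>is\<in>multi_idx m. prod_list (map x is)) = (\<Sum>j\<in>UNIV. x j)^m"
proof (induction m)
  case 0
  have "multi_idx 0 = {[] :: 'n list}" unfolding multi_idx_def by auto
  then show ?case by simp
next
  case (Suc m)
  have inj: "inj_on (\<lambda>(j,is). j#is) (UNIV \<times> (multi_idx m :: 'n list set))"
    by (auto simp: inj_on_def)
  have "(\<Sum>is\<in>multi_idx (Suc m). prod_list (map x is))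
      = (\<Sum>p\<in>UNIV \<times> multi_idx m. prod_list (map x ((\<lambda>(j,is). j#is) p)))"
    unfolding multi_idx_Suc by (subst sum.reindex[OF inj]) (simp add: comp_def)
  also have "\<dots> = (\<Sum>j\<in>UNIV. \<Sum>is\<in>multi_idx m. x j * prod_list (map x is))"
    unfolding sum.cartesian_product by (intro sum.cong) auto
  also have "\<dots> = (\<Sum>j\<in>UNIV. x j * (\<Sum>j\<in>UNIV. x j)^m)"
    by (simp add: sum_distrib_left[symmetric] Suc.IH)
  also have "\<dots> = (\<Sum>j\<in>UNIV. x j)^Suc m" by (simp add: sum_distrib_right)
  finally show ?case .
qed

lemma ST_bounds:
  fixes x :: "'n::finite \<Rightarrow> real"
  assumes cs: "columnwise_substochastic k Pbar" and x: "\<forall>i. 0 \<le> x i"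
  shows "0 \<le> (\<Sum>l\<in>UNIV. tensor_apply k Pbar x l)"
    and "(\<Sum>l\<in>UNIV. tensor_apply k Pbar x l) \<le> (\<Sum>j\<in>UNIV. x j)^(k-1)"
proof -
  have p: "0 \<le> prod_list (map x is)" for "is"
    by (rule prod_list_nonneg) (use x in auto)
  have eq: "(\<Sum>l\<in>UNIV. tensor_apply k Pbar x l)
     = (\<Sum>is\<in>multi_idx (k-1). (\<Sum>l\<in>UNIV. Pbar l is) * prod_list (map x is))"
    unfolding tensor_apply_def sum_distrib_right by (rule sum.swap)
  show "0 \<le> (\<Sum>l\<in>UNIV. tensor_apply k Pbar x l)"
    unfolding eq using cs p
    by (intro sum_nonneg mult_nonneg_nonneg) (auto simp: columnwise_substochastic_def intro!: sum_nonneg)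
  have "(\<Sum>is\<in>multi_idx (k-1). (\<Sum>l\<in>UNIV. Pbar l is) * prod_list (map x is))
      \<le> (\<Sum>is\<in>multi_idx (k-1). prod_list (map x is))"
    using cs p by (intro sum_mono mult_left_le_one_le) (auto simp: columnwise_substochastic_def intro!: sum_nonneg)
  then show "(\<Sum>l\<in>UNIV. tensor_apply k Pbar x l) \<le> (\<Sum>j\<in>UNIV. x j)^(k-1)"
    unfolding eq sum_prod_pow .
qed

lemma P_expand:
  fixes x :: "'n::finite \<Rightarrow> real"
  shows "tensor_apply k (\<lambda>i is. Pbar i is + v i * (1 - (\<Sum>l\<in>UNIV. Pbar l is))) x i
     = tensor_apply k Pbar x i + v i * ((\<Sum>j\<in>UNIV. x j)^(k-1) - (\<Sum>l\<in>UNIV. tensor_apply k Pbar x l))"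
proof -
  have eq: "(\<Sum>l\<in>UNIV. tensor_apply k Pbar x l)
     = (\<Sum>is\<in>multi_idx (k-1). (\<Sum>l\<in>UNIV. Pbar l is) * prod_list (map x is))"
    unfolding tensor_apply_def sum_distrib_right by (rule sum.swap)
  show ?thesis
    unfolding eq sum_prod_pow[symmetric] 
    unfolding tensor_apply_def
    by (simp add: algebra_simps sum.distrib sum_subtractf sum_distrib_left)
qed

lemma ex1_transfer:
  assumes "\<forall>y. Y y \<longrightarrow> X (f y)" "\<forall>x. X x \<longrightarrow> Y (g x)"
    "\<forall>x. X x \<longrightarrow> f (g x) = x" "\<forall>y. Y y \<longrightarrow> g (f y) = y"
  shows "(\<exists>!x. X x) \<longleftrightarrow> (\<exists>!y. Y y)"
  using assms by metis

theorem theorem3p15: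
  fixes k :: nat and Pbar :: "'n::finite \<Rightarrow> 'n list \<Rightarrow> real"
    and v :: "'n \<Rightarrow> real" and \<alpha> :: real
  assumes "k \<ge> 2"
    and "columnwise_substochastic k Pbar"
    and "stochastic_vec v"
    and "0 \<le> \<alpha>" and "\<alpha> < 1"
  defines "P \<equiv> (\<lambda>i is. Pbar i is + v i * (1 - (\<Sum>l\<in>UNIV. Pbar l is)))"
  shows "(\<exists>!x::'n \<Rightarrow> real.
            (\<forall>i. x i = \<alpha> * tensor_apply k P x i + (1 - \<alpha>) * v i) \<and>
            (\<forall>i. 0 \<le> x i) \<and> (\<Sum>i\<in>UNIV. x i) = 1)
     \<longleftrightarrow>
         (\<exists>!y::'n \<Rightarrow> real. (\<forall>i. 0 \<le> y i) \<and>
            (\<forall>i. (\<Sum>j\<in>UNIV. y j) ^ (k - 2) * y i - \<alpha> * tensor_apply k Pbar y i = v i))"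
proof -
  note k2 = assms(1) and cs = assms(2) and a0 = assms(4) and a1 = assms(5)
  have vs: "(\<Sum>i\<in>UNIV. v i) = 1" using assms(3) by (simp add: stochastic_vec_def)
  define m where "m = k - 1"
  have m1: "m \<ge> 1" and km: "k - 2 = m - 1" and km1: "k - 1 = m" using k2 by (auto simp: m_def)
  have powm: "(s::real) ^ (m-1) * s = s ^ m" for s using m1
    by (metis One_nat_def Suc_pred' less_le_trans power_Suc2 zero_less_one)
  define S where "S = (\<lambda>y::'n\<Rightarrow>real. \<Sum>j\<in>UNIV. y j)"
  define T where "T = (\<lambda>y::'n\<Rightarrow>real. tensor_apply k Pbar y)"
  define ST where "ST = (\<lambda>y::'n\<Rightarrow>real. \<Sum>l\<in>UNIV. T y l)"
  define c where "c = (\<lambda>x. 1 - \<alpha> * ST x)"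
  define sc where "sc = (\<lambda>x. root m (1 / c x))"
  have Tscale: "T (\<lambda>j. a * y j) i = a^m * T y i" for a y i
    unfolding T_def using tensor_scale[of k Pbar a y i] km1 by simp
  have STscale: "ST (\<lambda>j. a * y j) = a^m * ST y" for a y
    unfolding ST_def Tscale by (simp add: sum_distrib_left)
  have Sscale: "S (\<lambda>j. a * y j) = a * S y" for a y
    unfolding S_def by (simp add: sum_distrib_left)
  have STb: "0 \<le> ST y" "ST y \<le> S y ^ m" if "\<forall>i. 0 \<le> y i" for y
    using ST_bounds[OF cs that] unfolding ST_def T_def S_def km1 by auto
  have Pexp: "tensor_apply k P x i = T x i + v i * (S x ^ m - ST x)" for x i
    unfolding P_def T_def ST_def S_def using P_expand[of k Pbar v x i] km1 by simp
  have Yfacts: "S y > 0 \<and> \<alpha> * ST y = S y ^ m - 1"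
    if y0: "\<forall>i. 0 \<le> y i" and ye: "\<forall>i. S y ^ (m-1) * y i - \<alpha> * T y i = v i" for y
  proof -
    have "(\<Sum>i\<in>UNIV. S y ^ (m-1) * y i - \<alpha> * T y i) = 1" using ye vs by simp
    then have e: "S y ^ m - \<alpha> * ST y = 1"
      unfolding sum_subtractf sum_distrib_left[symmetric] ST_def
      using powm[of "S y"] by (simp add: S_def)
    have "S y \<ge> 0" unfolding S_def using y0 by (simp add: sum_nonneg)
    moreover have "S y \<noteq> 0"
    proof
      assume "S y = 0"
      then have "- \<alpha> * ST y = 1" using e m1 by (simp add: power_0_left)
      moreover have "\<alpha> * ST y \<ge> 0" using STb[OF y0] a0 by simp
      ultimately show False by simp
    qed
    ultimately show ?thesis using e by auto
  qed
  have cpos: "c x > 0" if x0: "\<forall>i. 0 \<le> x i" and Sx: "S x = 1" for x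
  proof -
    have "ST x \<le> 1" using STb[OF x0] Sx by simp
    then have "\<alpha> * ST x \<le> \<alpha> * 1" using a0 by (rule mult_left_mono)
    then show ?thesis using a1 unfolding c_def by simp
  qed
  show ?thesis
  proof (rule ex1_transfer[where f = "\<lambda>y i. (1 / S y) * y i" and g = "\<lambda>x i. sc x * x i"];
         intro allI impI; elim conjE)
    fix y :: "'n \<Rightarrow> real"
    assume y0: "\<forall>i. 0 \<le> y i" and ye0: "\<forall>i. (\<Sum>j\<in>UNIV. y j) ^ (k - 2) * y i - \<alpha> * tensor_apply k Pbar y i = v i"
    have ye: "\<forall>i. S y ^ (m-1) * y i - \<alpha> * T y i = v i" using ye0 unfolding S_def T_def km .
    from Yfacts[OF y0 ye] have Sp: "S y > 0" and aST: "\<alpha> * ST y = S y ^ m - 1" by auto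
    show "(\<forall>i. 1 / S y * y i = \<alpha> * tensor_apply k P (\<lambda>i. 1 / S y * y i) i + (1 - \<alpha>) * v i) \<and>
          (\<forall>i. 0 \<le> 1 / S y * y i) \<and> (\<Sum>i\<in>UNIV. 1 / S y * y i) = 1"
    proof (intro conjI allI)
      fix i
      have Sm: "S y ^ m > 0" using Sp by simp
      have "\<alpha> * tensor_apply k P (\<lambda>i. 1 / S y * y i) i + (1 - \<alpha>) * v i
          = \<alpha> * ((1 / S y)^m * T y i + v i * (1 - (1 / S y)^m * ST y)) + (1 - \<alpha>) * v i"
        unfolding Pexp Tscale STscale Sscale using Sp by (simp add: S_def)
      also have "\<dots> = (\<alpha> * T y i + v i * (S y ^ m - \<alpha> * ST y)) / S y ^ m"
        using Sm Sp by (simp add: field_simps power_divide)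
      also have "\<dots> = (\<alpha> * T y i + v i) / S y ^ m"
        unfolding aST using Sm by (simp add: field_simps)
      also have "\<dots> = (S y ^ (m-1) * y i) / (S y ^ (m-1) * S y)"
        using ye[rule_format, of i] powm by simp
      also have "\<dots> = 1 / S y * y i" using Sp by simp
      finally show "1 / S y * y i = \<alpha> * tensor_apply k P (\<lambda>i. 1 / S y * y i) i + (1 - \<alpha>) * v i" by simp
    next
      fix i show "0 \<le> 1 / S y * y i" using Sp y0 by simp
    next
      show "(\<Sum>i\<in>UNIV. 1 / S y * y i) = 1" using Sscale[of "1 / S y" y] Sp by (simp add: S_def)
    qed
  next
    fix y :: "'n \<Rightarrow> real"
    assume y0: "\<forall>i. 0 \<le> y i" and ye0: "\<forall>i. (\<Sum>j\<in>UNIV. y j) ^ (k - 2) * y i - \<alpha> * tensor_apply k Pbar y i = v i"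
    have ye: "\<forall>i. S y ^ (m-1) * y i - \<alpha> * T y i = v i" using ye0 unfolding S_def T_def km .
    from Yfacts[OF y0 ye] have Sp: "S y > 0" and aST: "\<alpha> * ST y = S y ^ m - 1" by auto
    have "c (\<lambda>i. 1 / S y * y i) = 1 / S y ^ m"
      unfolding c_def STscale using Sp aST by (simp add: field_simps power_divide)
    then have "sc (\<lambda>i. 1 / S y * y i) = S y"
      unfolding sc_def using Sp m1 by (simp add: real_root_power_cancel)
    then show "(\<lambda>i. sc (\<lambda>i. 1 / S y * y i) * (1 / S y * y i)) = y" using Sp by auto
  next
    fix x :: "'n \<Rightarrow> real"
    assume xe: "\<forall>i. x i = \<alpha> * tensor_apply k P x i + (1 - \<alpha>) * v i" and x0: "\<forall>i. 0 \<le> x i"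
      and xs: "(\<Sum>i\<in>UNIV. x i) = 1"
    have Sx: "S x = 1" using xs by (simp add: S_def)
    have cp: "c x > 0" using cpos[OF x0 Sx] .
    have sp: "sc x > 0" unfolding sc_def using cp m1 by simp
    have spow: "sc x ^ m = 1 / c x" unfolding sc_def using cp m1 by (simp add: real_root_pow_pos2)
    have xc: "x i - \<alpha> * T x i = c x * v i" for i
      using xe[rule_format, of i] unfolding Pexp Sx c_def by (simp add: algebra_simps)
    show "(\<forall>i. 0 \<le> sc x * x i) \<and>
          (\<forall>i. (\<Sum>j\<in>UNIV. sc x * x j) ^ (k - 2) * (sc x * x i) - \<alpha> * tensor_apply k Pbar (\<lambda>i. sc x * x i) i = v i)"
    proof (intro conjI allI)
      fix i show "0 \<le> sc x * x i" using sp x0 by simp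
    next
      fix i
      have "(\<Sum>j\<in>UNIV. sc x * x j) ^ (k - 2) * (sc x * x i) - \<alpha> * tensor_apply k Pbar (\<lambda>i. sc x * x i) i
          = S (\<lambda>j. sc x * x j) ^ (m-1) * (sc x * x i) - \<alpha> * T (\<lambda>i. sc x * x i) i"
        unfolding S_def T_def km ..
      also have "\<dots> = sc x ^ (m-1) * sc x * x i - \<alpha> * sc x ^ m * T x i"
        unfolding Sscale Tscale Sx by simp
      also have "\<dots> = sc x ^ m * (x i - \<alpha> * T x i)" unfolding powm by (simp add: algebra_simps)
      also have "\<dots> = v i" unfolding xc spow using cp by simp
      finally show "(\<Sum>j\<in>UNIV. sc x * x j) ^ (k - 2) * (sc x * x i) - \<alpha> * tensor_apply k Pbar (\<lambda>i. sc x * x i) i = v i" .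
    qed
  next
    fix x :: "'n \<Rightarrow> real"
    assume x0: "\<forall>i. 0 \<le> x i" and xs: "(\<Sum>i\<in>UNIV. x i) = 1"
    have "S (\<lambda>i. sc x * x i) = sc x" unfolding Sscale using xs by (simp add: S_def)
    moreover have "sc x \<noteq> 0" using cpos[OF x0] xs m1 unfolding sc_def S_def by simp
    ultimately show "(\<lambda>i. 1 / S (\<lambda>i. sc x * x i) * (sc x * x i)) = x" by auto
  qed
qed

end
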